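(* Every sublattice $L$ of $A_2$ of rank $2$ is reflection invariant.
   Context: Let $H_0=\{x\in\mathbb R^{3}:x_0+x_1+x_2=0\}$ and $A_2=H_0\cap\mathbb Z^3$. For $p,q\in H_0$ let $d_\triangle(p,q)=\max_i(p_i-q_i)$, and for $x\in H_0$ let $h_{\triangle,L}(x)=\min_{p\in L}d_\triangle(x,p)$. $\mathrm{Crit}(L)$ denotes the set of points of $H_0$ that are local maxima of $h_{\triangle,L}$ on $H_0$. $L$ is reflection invariant if there exists $t\in\mathbb R^{3}$ with $-\mathrm{Crit}(L)=\mathrm{Crit}(L)+t$. *)

theory Defs
  imports "HOL-Analysis.Analysis"
begin

definition H0 :: "(real^3) set" where
  "H0 = {x. x$0 + x$1 + x$2 = 0}"

definition A2 :: "(real^3) set" where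
  "A2 = {x \<in> H0. \<forall>i. x$i \<in> \<int>}"

definition d_tri :: "real^3 \<Rightarrow> real^3 \<Rightarrow> real" where
  "d_tri p q = Max (range (\<lambda>i. p$i - q$i))"

text \<open>h_{tri,L}(x) = min over p in L of d_tri(x,p); the minimum is attained for
  lattices, so it coincides with the infimum used here.\<close>
definition h_tri :: "(real^3) set \<Rightarrow> real^3 \<Rightarrow> real" where
  "h_tri L x = Inf ((\<lambda>p. d_tri x p) ` L)"

definition Crit :: "(real^3) set \<Rightarrow> (real^3) set" where
  "Crit L = {x \<in> H0. \<exists>e>0. \<forall>y\<in>H0. dist y x < e \<longrightarrow> h_tri L y \<le> h_tri L x}"

definition reflection_invariant :: "(real^3) set \<Rightarrow> bool" where
  "reflection_invariant L \<longleftrightarrow> (\<exists>t::real^3. uminus ` Crit L = (\<lambda>x. x + t) ` Crit L)"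

definition sublattice_rank2 :: "(real^3) set \<Rightarrow> bool" where
  "sublattice_rank2 L \<longleftrightarrow> L \<subseteq> A2 \<and> 0 \<in> L \<and> (\<forall>x\<in>L. \<forall>y\<in>L. x - y \<in> L) \<and> dim L = 2"

end

theory Submission
  imports Defs
begin

lemma ex3: "(i::3) = 0 \<or> i = 1 \<or> i = 2"
proof (induct i)
  case (of_int z)
  then have "z = 0 \<or> z = 1 \<or> z = 2" by fastforce
  then show ?case by auto
qed

lemma all3: "(\<forall>i::3. P i) \<longleftrightarrow> P 0 \<and> P 1 \<and> P 2"
  using ex3 by metis

lemma dist3: "(0::3) \<noteq> 1" "(0::3) \<noteq> 2" "(1::3) \<noteq> 2" "(1::3) \<noteq> 0" "(2::3) \<noteq> 0" "(2::3) \<noteq> 1"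
  by simp_all

lemma d_ge: "p$i - q$i \<le> d_tri p q"
  unfolding d_tri_def by (rule Max_ge) auto

lemma d_less: "d_tri p q < t \<longleftrightarrow> (\<forall>i. p$i - q$i < t)"
  unfolding d_tri_def by (subst Max_less_iff) auto

lemma H0_sum: "x \<in> H0 \<Longrightarrow> x$0 + x$1 + x$2 = 0"
  by (simp add: H0_def)

lemma d_nonneg: "p \<in> H0 \<Longrightarrow> q \<in> H0 \<Longrightarrow> 0 \<le> d_tri p q"
proof -
  assume a: "p \<in> H0" "q \<in> H0"
  have "p$0 - q$0 \<le> d_tri p q" "p$1 - q$1 \<le> d_tri p q" "p$2 - q$2 \<le> d_tri p q" by (rule d_ge)+
  with H0_sum[OF a(1)] H0_sum[OF a(2)] show ?thesis by linarith
qed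

definition lfree :: "(real^3) set \<Rightarrow> real^3 \<Rightarrow> bool" where
  "lfree L a \<longleftrightarrow> (\<forall>q\<in>L. \<not> (q$0 > a$0 \<and> q$1 > a$1 \<and> q$2 > a$2))"

definition corner :: "(real^3) set \<Rightarrow> real^3 \<Rightarrow> bool" where
  "corner L a \<longleftrightarrow> lfree L a
     \<and> (\<exists>p\<in>L. p$0 = a$0 \<and> p$1 > a$1 \<and> p$2 > a$2)
     \<and> (\<exists>p\<in>L. p$1 = a$1 \<and> p$0 > a$0 \<and> p$2 > a$2)
     \<and> (\<exists>p\<in>L. p$2 = a$2 \<and> p$0 > a$0 \<and> p$1 > a$1)"

definition grp :: "(real^3) set \<Rightarrow> bool" where
  "grp L \<longleftrightarrow> 0 \<in> L \<and> (\<forall>x\<in>L. \<forall>y\<in>L. x - y \<in> L) \<and> L \<subseteq> A2"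

lemma grp_diff: "grp L \<Longrightarrow> x \<in> L \<Longrightarrow> y \<in> L \<Longrightarrow> x - y \<in> L"
  by (simp add: grp_def)
lemma grp_zero: "grp L \<Longrightarrow> 0 \<in> L"
  by (simp add: grp_def)
lemma grp_neg: "grp L \<Longrightarrow> x \<in> L \<Longrightarrow> - x \<in> L"
  using grp_diff[of L 0 x] grp_zero[of L] by simp
lemma grp_add: "grp L \<Longrightarrow> x \<in> L \<Longrightarrow> y \<in> L \<Longrightarrow> x + y \<in> L"
  using grp_diff[of L x "- y"] grp_neg[of L y] by simp
lemma grp_int: "grp L \<Longrightarrow> x \<in> L \<Longrightarrow> x$i \<in> \<int>"
  by (auto simp: grp_def A2_def)
lemma grp_H0: "grp L \<Longrightarrow> x \<in> L \<Longrightarrow> x \<in> H0"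
  by (auto simp: grp_def A2_def)

lemma lfree_trans: assumes "grp L" "lfree L a" "l \<in> L" shows "lfree L (a + l)"
  unfolding lfree_def
proof
  fix q assume q: "q \<in> L"
  have "q - l \<in> L" using grp_diff[OF assms(1) q assms(3)] .
  with assms(2) have "\<not> ((q-l)$0 > a$0 \<and> (q-l)$1 > a$1 \<and> (q-l)$2 > a$2)"
    unfolding lfree_def by blast
  then show "\<not> (q$0 > (a+l)$0 \<and> q$1 > (a+l)$1 \<and> q$2 > (a+l)$2)" by auto
qed

lemma corner_trans: assumes "grp L" "corner L a" "l \<in> L" shows "corner L (a + l)"
proof -
  have lf: "lfree L (a + l)" using lfree_trans assms corner_def by blast
  obtain p0 where p0: "p0 \<in> L" "p0$0 = a$0" "p0$1 > a$1" "p0$2 > a$2" using assms(2) corner_def by blast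
  obtain p1 where p1: "p1 \<in> L" "p1$1 = a$1" "p1$0 > a$0" "p1$2 > a$2" using assms(2) corner_def by blast
  obtain p2 where p2: "p2 \<in> L" "p2$2 = a$2" "p2$0 > a$0" "p2$1 > a$1" using assms(2) corner_def by blast
  have "p0 + l \<in> L" "p1 + l \<in> L" "p2 + l \<in> L" using grp_add assms(1,3) p0(1) p1(1) p2(1) by auto
  note pl = this
  have e0: "\<exists>p\<in>L. p$0 = (a+l)$0 \<and> p$1 > (a+l)$1 \<and> p$2 > (a+l)$2"
    by (rule bexI[of _ "p0+l"]) (use p0 pl in auto)
  have e1: "\<exists>p\<in>L. p$1 = (a+l)$1 \<and> p$0 > (a+l)$0 \<and> p$2 > (a+l)$2"
    by (rule bexI[of _ "p1+l"]) (use p1 pl in auto)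
  have e2: "\<exists>p\<in>L. p$2 = (a+l)$2 \<and> p$0 > (a+l)$0 \<and> p$1 > (a+l)$1"
    by (rule bexI[of _ "p2+l"]) (use p2 pl in auto)
  from e0 e1 e2 show ?thesis unfolding corner_def using lf by blast
qed

lemma corner_le: assumes "corner L a" "corner L b" "a$0 \<le> b$0" "a$1 \<le> b$1" "a$2 \<le> b$2"
  shows "a = b"
proof -
  obtain p0 where p0: "p0 \<in> L" "p0$0 = b$0" "p0$1 > b$1" "p0$2 > b$2" using assms(2) corner_def by blast
  obtain p1 where p1: "p1 \<in> L" "p1$1 = b$1" "p1$0 > b$0" "p1$2 > b$2" using assms(2) corner_def by blast
  obtain p2 where p2: "p2 \<in> L" "p2$2 = b$2" "p2$0 > b$0" "p2$1 > b$1" using assms(2) corner_def by blast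
  have lf: "lfree L a" using assms(1) corner_def by blast
  have n0: "\<not> (p0$0 > a$0 \<and> p0$1 > a$1 \<and> p0$2 > a$2)" using lf p0(1) unfolding lfree_def by blast
  have eq0: "a$0 = b$0" using n0 p0 assms(3-5) by linarith
  have n1: "\<not> (p1$0 > a$0 \<and> p1$1 > a$1 \<and> p1$2 > a$2)" using lf p1(1) unfolding lfree_def by blast
  have eq1: "a$1 = b$1" using n1 p1 assms(3-5) by linarith
  have n2: "\<not> (p2$0 > a$0 \<and> p2$1 > a$1 \<and> p2$2 > a$2)" using lf p2(1) unfolding lfree_def by blast
  have eq2: "a$2 = b$2" using n2 p2 assms(3-5) by linarith
  show ?thesis
  proof (rule vec_eq_iff[THEN iffD2], rule allI)
    fix i :: 3
    show "a$i = b$i" using ex3[of i] eq0 eq1 eq2 by auto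
  qed
qed

lemma int_ge1: "(x::real) \<in> \<int> \<Longrightarrow> 0 < x \<Longrightarrow> 1 \<le> x"
proof -
  assume "x \<in> \<int>" "0 < x"
  then obtain k where "x = of_int k" by (auto elim: Ints_cases)
  with \<open>0 < x\<close> show ?thesis by simp
qed

definition ncorner :: "(real^3) set \<Rightarrow> real^3 \<Rightarrow> bool" where
  "ncorner L a \<longleftrightarrow> corner L a \<and> a$0 = 0 \<and> a$1 < 0 \<and> a$2 < 0"

lemma corner_lfree: "corner L a \<Longrightarrow> q \<in> L \<Longrightarrow> \<not> (q$0 > a$0 \<and> q$1 > a$1 \<and> q$2 > a$2)"
  unfolding corner_def lfree_def by blast

lemma step:
  assumes G: "grp L" and na: "ncorner L a" and nb: "ncorner L b" and nc: "ncorner L c"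
    and o1: "a$1 < b$1" and o2: "b$1 < c$1"
    and iab: "a - b \<notin> L" and ibc: "b - c \<notin> L"
  shows "\<exists>b'. ncorner L b' \<and> a$1 < b'$1 \<and> b'$1 \<le> b$1 - 1 \<and> a - b' \<notin> L \<and> b' - c \<notin> L"
proof -
  have ca: "corner L a" and a0: "a$0 = 0" and a1: "a$1 < 0" and a2: "a$2 < 0"
    using na by (auto simp: ncorner_def)
  have cb: "corner L b" and b0: "b$0 = 0" and b1: "b$1 < 0" and b2: "b$2 < 0"
    using nb by (auto simp: ncorner_def)
  have cc: "corner L c" and c0: "c$0 = 0" and c1: "c$1 < 0" and c2: "c$2 < 0"
    using nc by (auto simp: ncorner_def)
  have ab2: "b$2 < a$2"
  proof (rule ccontr)
    assume "\<not> b$2 < a$2"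
    then have "a = b" using corner_le[OF ca cb] a0 b0 o1 by simp
    then have "a - b \<in> L" using grp_zero[OF G] by simp
    with iab show False ..
  qed
  have bc2: "c$2 < b$2"
  proof (rule ccontr)
    assume "\<not> c$2 < b$2"
    then have "b = c" using corner_le[OF cb cc] b0 c0 o2 by simp
    then have "b - c \<in> L" using grp_zero[OF G] by simp
    with ibc show False ..
  qed
  obtain q1 where q1: "q1 \<in> L" "q1$1 = b$1" "q1$0 > b$0" "q1$2 > b$2" using cb corner_def by blast
  obtain q2 where q2: "q2 \<in> L" "q2$2 = b$2" "q2$0 > b$0" "q2$1 > b$1" using cb corner_def by blast
  have q12: "q1$2 \<le> a$2" using corner_lfree[OF ca q1(1)] q1 a0 b0 o1 by linarith
  have q21: "q2$1 \<le> c$1" using corner_lfree[OF cc q2(1)] q2 c0 b0 bc2 by linarith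
  have d1: "q2 - q1 \<in> L" using grp_diff[OF G q2(1) q1(1)] .
  have d2: "q1 - q2 \<in> L" using grp_diff[OF G q1(1) q2(1)] .
  have "q2$0 - q1$0 \<le> 0" using corner_lfree[OF cb d1] q1 q2 b0 b1 b2 q12 a2 by auto
  moreover have "q1$0 - q2$0 \<le> 0" using corner_lfree[OF cb d2] q1 q2 b0 b1 b2 q21 c1 by auto
  ultimately have q0: "q1$0 = q2$0" by linarith
  define w where "w = q2 - q1"
  have wL: "w \<in> L" using d1 w_def by simp
  have mwL: "- w \<in> L" using grp_neg[OF G wL] .
  define b' where "b' = b + (- w)"
  have cb': "corner L b'" using corner_trans[OF G cb mwL] b'_def by simp
  have b'0: "b'$0 = 0" using b0 q0 by (simp add: b'_def w_def)
  have b'1: "b'$1 = b$1 - (q2$1 - b$1)" using q1 by (simp add: b'_def w_def)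
  have b'2: "b'$2 = q1$2" using q2 by (simp add: b'_def w_def)
  have wint: "q2$1 - b$1 \<in> \<int>" using grp_int[OF G q2(1)] grp_int[OF G q1(1)] q1(2)
    by (metis Ints_diff)
  have w1: "1 \<le> q2$1 - b$1" using int_ge1[OF wint] q2 by simp
  have nb': "ncorner L b'" unfolding ncorner_def using cb' b'0 b'1 b'2 q12 a2 w1 b1 by simp
  have ab': "a$1 < b'$1"
  proof (rule ccontr)
    assume "\<not> a$1 < b'$1"
    then have "b' = a" using corner_le[OF cb' ca] b'0 a0 b'2 q12 by simp
    then have "a - b = b' - b" by simp
    also have "\<dots> = - w" by (simp add: b'_def)
    finally have "a - b = - w" .
    with mwL iab show False by simp
  qed
  have iab': "a - b' \<notin> L"
  proof
    assume "a - b' \<in> L"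
    then have "(a - b') - w \<in> L" using grp_diff[OF G _ wL] by blast
    moreover have "(a - b') - w = a - b" by (simp add: b'_def)
    ultimately show False using iab by simp
  qed
  have ib'c: "b' - c \<notin> L"
  proof
    assume "b' - c \<in> L"
    then have "(b' - c) + w \<in> L" using grp_add[OF G _ wL] by blast
    moreover have "(b' - c) + w = b - c" by (simp add: b'_def)
    ultimately show False using ibc by simp
  qed
  show ?thesis using nb' ab' b'1 w1 iab' ib'c by (intro exI[of _ b']) auto
qed

lemma no_three_aux:
  assumes G: "grp L"
  shows "\<forall>a b c. ncorner L a \<and> ncorner L b \<and> ncorner L c \<and> a$1 < b$1 \<and> b$1 < c$1
     \<and> a - b \<notin> L \<and> b - c \<notin> L \<and> a - c \<notin> L \<and> b$1 - a$1 < real n \<longrightarrow> False"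
proof (induction n)
  case 0
  then show ?case by auto
next
  case (Suc n)
  show ?case
  proof (intro allI impI)
    fix a b c
    assume H: "ncorner L a \<and> ncorner L b \<and> ncorner L c \<and> a$1 < b$1 \<and> b$1 < c$1
     \<and> a - b \<notin> L \<and> b - c \<notin> L \<and> a - c \<notin> L \<and> b$1 - a$1 < real (Suc n)"
    then obtain b' where b': "ncorner L b'" "a$1 < b'$1" "b'$1 \<le> b$1 - 1" "a - b' \<notin> L" "b' - c \<notin> L"
      using step[OF G, of a b c] by blast
    have "b'$1 - a$1 < real n" using b'(3) H by simp
    moreover have "b'$1 < c$1" using b'(3) H by simp
    ultimately show False using Suc.IH[rule_format, of a b' c] H b' by blast
  qed
qed

lemma neg_notin: "grp L \<Longrightarrow> x - y \<notin> L \<Longrightarrow> y - x \<notin> L"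
  using grp_neg[of L "y - x"] by auto

lemma no_three_ord:
  assumes G: "grp L" "ncorner L a" "ncorner L b" "ncorner L c" "a$1 < b$1" "b$1 < c$1"
    "a - b \<notin> L" "b - c \<notin> L" "a - c \<notin> L"
  shows False
proof -
  have "b$1 - a$1 < real (nat \<lceil>b$1 - a$1\<rceil> + 1)" using real_nat_ceiling_ge[of "b$1 - a$1"] by simp
  then show False using no_three_aux[OF G(1), rule_format, of a b c "nat \<lceil>b$1 - a$1\<rceil> + 1"] assms by blast
qed

lemma ncorner_distinct:
  assumes G: "grp L" "ncorner L a" "ncorner L b" "a - b \<notin> L"
  shows "a$1 \<noteq> b$1"
proof
  assume e: "a$1 = b$1"
  have "a$0 = 0" "b$0 = 0" "corner L a" "corner L b" using assms by (auto simp: ncorner_def)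
  then have "a = b" using e corner_le[of L a b] corner_le[of L b a] by (cases "a$2 \<le> b$2") auto
  then show False using assms(4) grp_zero[OF G(1)] by simp
qed

lemma no_three:
  assumes G: "grp L" "ncorner L a" "ncorner L b" "ncorner L c"
    "a - b \<notin> L" "b - c \<notin> L" "a - c \<notin> L"
  shows False
proof -
  have n: "b - a \<notin> L" "c - b \<notin> L" "c - a \<notin> L" using neg_notin[OF G(1)] assms by auto
  have d: "a$1 \<noteq> b$1" "b$1 \<noteq> c$1" "a$1 \<noteq> c$1" using ncorner_distinct[OF G(1)] assms by auto
  consider "a$1 < b$1" "b$1 < c$1" | "a$1 < c$1" "c$1 < b$1" | "b$1 < a$1" "a$1 < c$1"
    | "b$1 < c$1" "c$1 < a$1" | "c$1 < a$1" "a$1 < b$1" | "c$1 < b$1" "b$1 < a$1"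
    using d by linarith
  then show False
  proof cases
    case 1 then show ?thesis using no_three_ord[OF G(1), of a b c] assms n by blast
  next
    case 2 then show ?thesis using no_three_ord[OF G(1), of a c b] assms n by blast
  next
    case 3 then show ?thesis using no_three_ord[OF G(1), of b a c] assms n by blast
  next
    case 4 then show ?thesis using no_three_ord[OF G(1), of b c a] assms n by blast
  next
    case 5 then show ?thesis using no_three_ord[OF G(1), of c a b] assms n by blast
  next
    case 6 then show ?thesis using no_three_ord[OF G(1), of c b a] assms n by blast
  qed
qed

lemma h_le: assumes "grp L" "x \<in> H0" "p \<in> L" shows "h_tri L x \<le> d_tri x p"
  unfolding h_tri_def
proof (rule cInf_lower)
  show "d_tri x p \<in> (\<lambda>p. d_tri x p) ` L" using assms(3) by simp
  show "bdd_below ((\<lambda>p. d_tri x p) ` L)"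
    by (rule bdd_belowI[of _ 0]) (use assms grp_H0 d_nonneg in auto)
qed

lemma h_less: assumes "grp L" "h_tri L x < t" shows "\<exists>p\<in>L. d_tri x p < t"
proof -
  have "(\<lambda>p. d_tri x p) ` L \<noteq> {}" using grp_zero[OF assms(1)] by auto
  from cInf_lessD[OF this] assms(2) show ?thesis unfolding h_tri_def by auto
qed

lemma int_eq_lemma:
  fixes z :: real and m :: int and d0 :: real
  assumes "real_of_int m \<le> z" "real_of_int m > z - d0"
    and "d0 = (if z - of_int \<lfloor>z\<rfloor> = 0 then 1 else z - of_int \<lfloor>z\<rfloor>)"
  shows "real_of_int m = z"
proof -
  have mF: "m \<le> \<lfloor>z\<rfloor>" using assms(1) le_floor_iff by blast
  show ?thesis
  proof (cases "z - of_int \<lfloor>z\<rfloor> = 0")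
    case True
    then have "real_of_int m > of_int \<lfloor>z\<rfloor> - 1" using assms by simp
    then have "m > \<lfloor>z\<rfloor> - 1" by linarith
    with mF have "m = \<lfloor>z\<rfloor>" by linarith
    with True show ?thesis by simp
  next
    case False
    then have "real_of_int m > of_int \<lfloor>z\<rfloor>" using assms by simp
    then have "m > \<lfloor>z\<rfloor>" by linarith
    with mF show ?thesis by linarith
  qed
qed

lemma crit_support:
  assumes G: "grp L" and xc: "x \<in> Crit L"
  defines "a \<equiv> x - (\<chi> k. h_tri L x)"
  shows "\<exists>p\<in>L. p$i = a$i \<and> (\<forall>j. j \<noteq> i \<longrightarrow> p$j > a$j)"
proof -
  define hx where "hx = h_tri L x"
  have ak: "\<And>k. a$k = x$k - hx" by (simp add: a_def hx_def)
  have xH: "x \<in> H0" using xc by (simp add: Crit_def)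
  obtain e where e: "e > 0" "\<forall>y\<in>H0. dist y x < e \<longrightarrow> h_tri L y \<le> hx"
    using xc unfolding Crit_def hx_def by blast
  define f where "f = a$i - of_int \<lfloor>a$i\<rfloor>"
  define d0 where "d0 = (if f = 0 then 1 else f)"
  have f01: "0 \<le> f" "f < 1" unfolding f_def by linarith+
  have d0: "0 < d0" "d0 \<le> 1" using f01 by (auto simp: d0_def)
  define \<epsilon> where "\<epsilon> = min (e/7) (d0/4)"
  have ep: "\<epsilon> > 0" "\<epsilon> \<le> e/7" "\<epsilon> \<le> d0/4" using e d0 by (auto simp: \<epsilon>_def)
  define v :: "real^3" where "v = (\<chi> k. if k = i then -2 else 1)"
  define y where "y = x + \<epsilon> *\<^sub>R v"
  have vsum: "v$0 + v$1 + v$2 = 0" using ex3[of i] by (auto simp: v_def)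
  have "y$0 + y$1 + y$2 = (x$0+x$1+x$2) + \<epsilon>*(v$0+v$1+v$2)" by (simp add: y_def algebra_simps)
  then have yH: "y \<in> H0" using H0_sum[OF xH] vsum by (simp add: H0_def)
  have nv: "norm v \<le> 6"
  proof -
    have "norm v \<le> sum (\<lambda>k. \<bar>v$k\<bar>) UNIV" by (rule norm_le_l1_cart)
    also have "\<dots> \<le> of_nat (card (UNIV::3 set)) * 2"
      by (rule sum_bounded_above) (auto simp: v_def)
    finally show ?thesis by simp
  qed
  have "dist y x = \<epsilon> * norm v" using ep by (simp add: y_def dist_norm)
  also have "\<dots> \<le> \<epsilon> * 6" using nv ep by (intro mult_left_mono) auto
  also have "\<dots> < e" using ep e by linarith
  finally have "h_tri L y \<le> hx" using e yH by blast
  then have "h_tri L y < hx + \<epsilon>/2" using ep by linarith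
  then obtain p where p: "p \<in> L" "d_tri y p < hx + \<epsilon>/2" using h_less[OF G] by blast
  have pk: "\<And>k. y$k - p$k < hx + \<epsilon>/2" using p(2) d_less by blast
  have yk: "\<And>k. y$k = x$k + \<epsilon> * v$k" by (simp add: y_def)
  have pj: "\<forall>j. j \<noteq> i \<longrightarrow> p$j > a$j"
  proof (intro allI impI)
    fix j assume "j \<noteq> i"
    then have "v$j = 1" by (simp add: v_def)
    then show "p$j > a$j" using pk[of j] yk[of j] ak[of j] ep by simp
  qed
  have pi: "p$i > a$i - d0"
  proof -
    have "v$i = -2" by (simp add: v_def)
    then show ?thesis using pk[of i] yk[of i] ak[of i] ep by simp
  qed
  have lf: "\<not> (\<forall>k. p$k > a$k)"
  proof
    assume A: "\<forall>k. p$k > a$k"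
    have "\<forall>k. x$k - p$k < hx"
    proof
      fix k show "x$k - p$k < hx" using A[rule_format, of k] ak[of k] by simp
    qed
    then have "d_tri x p < hx" using d_less by blast
    moreover have "hx \<le> d_tri x p" using h_le[OF G xH p(1)] hx_def by simp
    ultimately show False by simp
  qed
  have pia: "p$i \<le> a$i" using lf pj by (metis not_le)
  obtain m where m: "p$i = of_int m" using grp_int[OF G p(1), of i] by (auto elim: Ints_cases)
  have "real_of_int m = a$i"
    by (rule int_eq_lemma[of m "a$i" d0]) (use m pia pi in \<open>auto simp: d0_def f_def\<close>)
  then show ?thesis using p(1) pj m by auto
qed

lemma crit_lfree:
  assumes G: "grp L" and xc: "x \<in> Crit L"
  shows "lfree L (x - (\<chi> k. h_tri L x))"
  unfolding lfree_def
proof (intro ballI notI)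
  fix q assume q: "q \<in> L" and A: "q$0 > (x - (\<chi> k. h_tri L x))$0 \<and> q$1 > (x - (\<chi> k. h_tri L x))$1 \<and> q$2 > (x - (\<chi> k. h_tri L x))$2"
  have xH: "x \<in> H0" using xc by (simp add: Crit_def)
  have "\<forall>k. x$k - q$k < h_tri L x"
  proof
    fix k :: 3 show "x$k - q$k < h_tri L x" using ex3[of k] A by auto
  qed
  then have "d_tri x q < h_tri L x" using d_less by blast
  with h_le[OF G xH q] show False by simp
qed

lemma crit_corner:
  assumes G: "grp L" and xc: "x \<in> Crit L"
  shows "corner L (x - (\<chi> k. h_tri L x))"
proof -
  let ?a = "x - (\<chi> k. h_tri L x)"
  obtain p0 where "p0 \<in> L" "p0$0 = ?a$0" "\<forall>j. j \<noteq> 0 \<longrightarrow> p0$j > ?a$j" using crit_support[OF G xc, of 0] by blast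
  then have e0: "\<exists>p\<in>L. p$0 = ?a$0 \<and> p$1 > ?a$1 \<and> p$2 > ?a$2" using dist3 by blast
  obtain p1 where "p1 \<in> L" "p1$1 = ?a$1" "\<forall>j. j \<noteq> 1 \<longrightarrow> p1$j > ?a$j" using crit_support[OF G xc, of 1] by blast
  then have e1: "\<exists>p\<in>L. p$1 = ?a$1 \<and> p$0 > ?a$0 \<and> p$2 > ?a$2" using dist3 by blast
  obtain p2 where "p2 \<in> L" "p2$2 = ?a$2" "\<forall>j. j \<noteq> 2 \<longrightarrow> p2$j > ?a$j" using crit_support[OF G xc, of 2] by blast
  then have e2: "\<exists>p\<in>L. p$2 = ?a$2 \<and> p$0 > ?a$0 \<and> p$1 > ?a$1" using dist3 by blast
  show ?thesis unfolding corner_def using crit_lfree[OF G xc] e0 e1 e2 by blast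
qed

lemma d_shift: "d_tri (y + l) p = d_tri y (p - l)"
  unfolding d_tri_def by (simp add: algebra_simps)

lemma h_shift: assumes G: "grp L" and l: "l \<in> L" shows "h_tri L (y + l) = h_tri L y"
proof -
  have "(\<lambda>p. d_tri (y + l) p) ` L = (\<lambda>p. d_tri y p) ` L"
  proof
    show "(\<lambda>p. d_tri (y + l) p) ` L \<subseteq> (\<lambda>p. d_tri y p) ` L"
    proof
      fix z assume "z \<in> (\<lambda>p. d_tri (y + l) p) ` L"
      then obtain p where p: "p \<in> L" "z = d_tri (y + l) p" by blast
      have "p - l \<in> L" using grp_diff[OF G p(1) l] .
      then show "z \<in> (\<lambda>p. d_tri y p) ` L" using p d_shift by blast
    qed
    show "(\<lambda>p. d_tri y p) ` L \<subseteq> (\<lambda>p. d_tri (y + l) p) ` L"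
    proof
      fix z assume "z \<in> (\<lambda>p. d_tri y p) ` L"
      then obtain p where p: "p \<in> L" "z = d_tri y p" by blast
      have pl: "p + l \<in> L" using grp_add[OF G p(1) l] .
      have "z = d_tri (y + l) (p + l)" using p d_shift[of y l "p + l"] by simp
      then show "z \<in> (\<lambda>p. d_tri (y + l) p) ` L" using pl by blast
    qed
  qed
  then show ?thesis unfolding h_tri_def by simp
qed

lemma H0_add: "x \<in> H0 \<Longrightarrow> y \<in> H0 \<Longrightarrow> x + y \<in> H0"
  by (simp add: H0_def algebra_simps)
lemma H0_diff: "x \<in> H0 \<Longrightarrow> y \<in> H0 \<Longrightarrow> x - y \<in> H0"
  by (simp add: H0_def algebra_simps)

lemma crit_shift: assumes G: "grp L" and xc: "x \<in> Crit L" and l: "l \<in> L"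
  shows "x + l \<in> Crit L"
proof -
  have xH: "x \<in> H0" using xc by (simp add: Crit_def)
  have lH: "l \<in> H0" using grp_H0[OF G l] .
  obtain e where e: "e > 0" "\<forall>y\<in>H0. dist y x < e \<longrightarrow> h_tri L y \<le> h_tri L x"
    using xc unfolding Crit_def by blast
  have "\<forall>y\<in>H0. dist y (x + l) < e \<longrightarrow> h_tri L y \<le> h_tri L (x + l)"
  proof (intro ballI impI)
    fix y assume yH: "y \<in> H0" and d: "dist y (x + l) < e"
    have "dist (y - l) x = dist y (x + l)" by (simp add: dist_norm algebra_simps)
    then have "h_tri L (y - l) \<le> h_tri L x" using e d H0_diff[OF yH lH] by simp
    moreover have "h_tri L y = h_tri L (y - l)" using h_shift[OF G l, of "y - l"] by simp
    ultimately show "h_tri L y \<le> h_tri L (x + l)" using h_shift[OF G l, of x] by simp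
  qed
  then show ?thesis using e(1) H0_add[OF xH lH] unfolding Crit_def by blast
qed

lemma crit_ncorner: assumes G: "grp L" and xc: "x \<in> Crit L"
  shows "\<exists>l\<in>L. ncorner L (x - (\<chi> k. h_tri L x) + l)"
proof -
  let ?a = "x - (\<chi> k. h_tri L x)"
  have ca: "corner L ?a" using crit_corner[OF G xc] .
  obtain p0 where p0: "p0 \<in> L" "p0$0 = ?a$0" "p0$1 > ?a$1" "p0$2 > ?a$2" using ca corner_def by blast
  have m: "- p0 \<in> L" using grp_neg[OF G p0(1)] .
  have "corner L (?a + - p0)" using corner_trans[OF G ca m] .
  moreover have "(?a + - p0)$0 = 0" "(?a + - p0)$1 < 0" "(?a + - p0)$2 < 0"
    using p0 by simp_all
  ultimately show ?thesis using m unfolding ncorner_def by blast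
qed

lemma cong_lemma: assumes G: "grp L" and H: "xj \<in> H0" "xk \<in> H0" "lj \<in> L" "lk \<in> L"
  and c: "(xj - (\<chi> k. hj) + lj) - (xk - (\<chi> k. hk) + lk) \<in> L"
  shows "xj - xk \<in> L"
proof -
  have "((xj - (\<chi> k. hj) + lj) - (xk - (\<chi> k. hk) + lk)) - (lj - lk) \<in> L"
    using grp_diff[OF G c grp_diff[OF G H(3,4)]] .
  moreover have "((xj - (\<chi> k. hj) + lj) - (xk - (\<chi> k. hk) + lk)) - (lj - lk) = (xj - xk) - (\<chi> k. hj - hk)"
    by (simp add: vec_eq_iff)
  ultimately have D: "(xj - xk) - (\<chi> k. hj - hk) \<in> L" by simp
  have "(xj - xk) - (\<chi> k. hj - hk) \<in> H0" using grp_H0[OF G D] .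
  then have "hj = hk" using H0_sum[OF H(1)] H0_sum[OF H(2)] by (simp add: H0_def)
  then have "(\<chi> k. hj - hk) = (0::real^3)" by (simp add: vec_eq_iff)
  then show ?thesis using D by simp
qed

lemma crit_classes: assumes G: "grp L" and c: "x1 \<in> Crit L" "x2 \<in> Crit L" "x3 \<in> Crit L"
  shows "x1 - x2 \<in> L \<or> x2 - x3 \<in> L \<or> x1 - x3 \<in> L"
proof (rule ccontr)
  assume N: "\<not> (x1 - x2 \<in> L \<or> x2 - x3 \<in> L \<or> x1 - x3 \<in> L)"
  have H: "x1 \<in> H0" "x2 \<in> H0" "x3 \<in> H0" using c by (auto simp: Crit_def)
  obtain l1 where l1: "l1 \<in> L" "ncorner L (x1 - (\<chi> k. h_tri L x1) + l1)" using crit_ncorner[OF G c(1)] by blast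
  obtain l2 where l2: "l2 \<in> L" "ncorner L (x2 - (\<chi> k. h_tri L x2) + l2)" using crit_ncorner[OF G c(2)] by blast
  obtain l3 where l3: "l3 \<in> L" "ncorner L (x3 - (\<chi> k. h_tri L x3) + l3)" using crit_ncorner[OF G c(3)] by blast
  show False
  proof (rule no_three[OF G l1(2) l2(2) l3(2)])
    show "x1 - (\<chi> k. h_tri L x1) + l1 - (x2 - (\<chi> k. h_tri L x2) + l2) \<notin> L"
      using cong_lemma[OF G H(1) H(2) l1(1) l2(1)] N by blast
    show "x2 - (\<chi> k. h_tri L x2) + l2 - (x3 - (\<chi> k. h_tri L x3) + l3) \<notin> L"
      using cong_lemma[OF G H(2) H(3) l2(1) l3(1)] N by blast
    show "x1 - (\<chi> k. h_tri L x1) + l1 - (x3 - (\<chi> k. h_tri L x3) + l3) \<notin> L"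
      using cong_lemma[OF G H(1) H(3) l1(1) l3(1)] N by blast
  qed
qed

lemma refl_from_s: assumes "\<forall>y\<in>Crit L. s - y \<in> Crit L" shows "reflection_invariant L"
  unfolding reflection_invariant_def
proof (intro exI[of _ "- s"] equalityI subsetI)
  fix z assume "z \<in> uminus ` Crit L"
  then obtain y where y: "y \<in> Crit L" "z = - y" by blast
  then have "s - y \<in> Crit L" using assms by blast
  moreover have "z = (s - y) + - s" using y by simp
  ultimately show "z \<in> (\<lambda>x. x + - s) ` Crit L" by blast
next
  fix z assume "z \<in> (\<lambda>x. x + - s) ` Crit L"
  then obtain y where y: "y \<in> Crit L" "z = y + - s" by blast
  then have "s - y \<in> Crit L" using assms by blast
  moreover have "z = - (s - y)" using y by simp
  ultimately show "z \<in> uminus ` Crit L" by blast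
qed

theorem mainTheorem18:
  fixes L :: "(real^3) set"
  assumes "sublattice_rank2 L"
  shows "reflection_invariant L"
proof -
  have G: "grp L" using assms unfolding sublattice_rank2_def grp_def by blast
  show ?thesis
  proof (cases "Crit L = {}")
    case True
    then show ?thesis by (intro refl_from_s[of L 0]) simp
  next
    case False
    then obtain x1 where x1: "x1 \<in> Crit L" by blast
    show ?thesis
    proof (cases "\<forall>y\<in>Crit L. y - x1 \<in> L")
      case True
      show ?thesis
      proof (rule refl_from_s[of L "x1 + x1"], intro ballI)
        fix y assume y: "y \<in> Crit L"
        have "x1 - y \<in> L" using grp_neg[OF G True[rule_format, OF y]] by simp
        then have "x1 + (x1 - y) \<in> Crit L" using crit_shift[OF G x1] by blast
        then show "x1 + x1 - y \<in> Crit L" by (simp add: algebra_simps)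
      qed
    next
      case False
      then obtain x2 where x2: "x2 \<in> Crit L" "x2 - x1 \<notin> L" by blast
      have n12: "x1 - x2 \<notin> L" using neg_notin[OF G x2(2)] .
      show ?thesis
      proof (rule refl_from_s[of L "x1 + x2"], intro ballI)
        fix y assume y: "y \<in> Crit L"
        have "x1 - y \<in> L \<or> x2 - y \<in> L"
          using crit_classes[OF G x1 x2(1) y] n12 grp_neg[OF G, of "x1 - y"] grp_neg[OF G, of "x2 - y"] by auto
        then show "x1 + x2 - y \<in> Crit L"
        proof
          assume "x1 - y \<in> L"
          then have "x2 + (x1 - y) \<in> Crit L" using crit_shift[OF G x2(1)] by blast
          then show ?thesis by (simp add: algebra_simps)
        next
          assume "x2 - y \<in> L"
          then have "x1 + (x2 - y) \<in> Crit L" using crit_shift[OF G x1] by blast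
          then show ?thesis by (simp add: algebra_simps)
        qed
      qed
    qed
  qed
qed

end
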